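(* Let $k\ge 2$ be an integer and let $q=p^r$ be a prime power with $p>k$. If $A\subset\mathbb{F}_q^n$ has size \[ |A|>(k+1)\cdot\binom{n+(k-1)q}{(k-1)(q-1)}, \] then $A$ contains a $k$-right corner.
   Context: $\mathbb{F}_q^n$ carries the standard bilinear form $\langle u,v\rangle=\sum_{i=1}^n u_iv_i$. Vectors $x_1,\dots,x_k,x_{k+1}\in\mathbb{F}_q^n$ form a $k$-right corner if they are pairwise distinct and the $k$ vectors $x_1-x_{k+1},\dots,x_k-x_{k+1}$ are mutually orthogonal, i.e. $\langle x_i-x_{k+1},x_j-x_{k+1}\rangle=0$ for all $1\le i<j\le k$. *)

theory Defs
  imports "HOL-Analysis.Analysis"
begin

text \<open>Vectors of F_q^n are modelled as functions nat => 'a vanishing outside {..<n}.\<close>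

definition Fvec :: "nat \<Rightarrow> (nat \<Rightarrow> 'a::zero) set" where
  "Fvec n = {x. \<forall>i\<ge>n. x i = 0}"

definition bform :: "nat \<Rightarrow> (nat \<Rightarrow> 'a::comm_ring_1) \<Rightarrow> (nat \<Rightarrow> 'a) \<Rightarrow> 'a" where
  "bform n u v = (\<Sum>i<n. u i * v i)"

definition right_corner :: "nat \<Rightarrow> nat \<Rightarrow> (nat \<Rightarrow> nat \<Rightarrow> 'a::comm_ring_1) \<Rightarrow> bool" where
  "right_corner n k x \<longleftrightarrow>
     (\<forall>i\<in>{1..k+1}. x i \<in> Fvec n) \<and>
     inj_on x {1..k+1} \<and>
     (\<forall>i j. 1 \<le> i \<and> i < j \<and> j \<le> k \<longrightarrow>
        bform n (\<lambda>t. x i t - x (k+1) t) (\<lambda>t. x j t - x (k+1) t) = 0)"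

end

theory Submission
  imports Defs "HOL-Library.Multiset"
begin


lemma ff_pow: fixes a :: "'a::{field,finite}" assumes "a \<noteq> 0"
  shows "a ^ (CARD('a) - 1) = 1"
proof -
  let ?U = "UNIV - {0::'a}"
  have inj: "inj_on (\<lambda>x. a * x) ?U" using assms by (auto simp: inj_on_def)
  have im: "(\<lambda>x. a * x) ` ?U = ?U"
  proof
    show "(\<lambda>x. a * x) ` ?U \<subseteq> ?U" using assms by auto
    show "?U \<subseteq> (\<lambda>x. a * x) ` ?U"
    proof
      fix y assume "y \<in> ?U"
      then have "y = a * (y / a)" "y / a \<in> ?U" using assms by auto
      then show "y \<in> (\<lambda>x. a * x) ` ?U" by blast
    qed
  qed
  have "prod (\<lambda>x. x) ?U = prod (\<lambda>x. a * x) ?U"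
    using prod.reindex[OF inj, of "\<lambda>x. x"] im by simp
  also have "\<dots> = a ^ card ?U * prod (\<lambda>x. x) ?U" by (simp add: prod.distrib)
  finally have "a ^ card ?U * prod (\<lambda>x. x) ?U = 1 * prod (\<lambda>x. x) ?U" by simp
  moreover have "prod (\<lambda>x. x) ?U \<noteq> 0" by (simp add: prod_zero_iff)
  ultimately have "a ^ card ?U = 1" by simp
  moreover have "card ?U = CARD('a) - 1" by (simp add: card_Diff_singleton)
  ultimately show ?thesis by simp
qed

lemma card_ge2: "CARD('a::{field,finite}) \<ge> 2"
proof -
  have "{0::'a,1} \<subseteq> UNIV" by simp
  then have "card {0::'a,1} \<le> CARD('a)" by (meson card_mono finite)
  then show ?thesis by simp
qed



definition mono_f :: "nat \<Rightarrow> nat multiset \<Rightarrow> (nat \<Rightarrow> 'a::comm_ring_1) \<Rightarrow> 'a" where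
  "mono_f n M y = (\<Prod>i\<in>#M. if i < n then y i else 1)"

definition Ms :: "nat \<Rightarrow> nat \<Rightarrow> nat multiset set" where
  "Ms n D = multisets_of_size {..n} D"

definition Vsp :: "nat \<Rightarrow> nat \<Rightarrow> ((nat \<Rightarrow> 'a::comm_ring_1) \<Rightarrow> 'a) set" where
  "Vsp n D = {f. \<exists>c. \<forall>y. f y = (\<Sum>M\<in>Ms n D. c M * mono_f n M y)}"

lemma Ms_finite: "finite (Ms n D)" unfolding Ms_def by auto

lemma Ms_card: "card (Ms n D) = (n + D) choose D"
  unfolding Ms_def by (simp add: card_multisets_of_size)

lemma mono_f_add: "mono_f n (M + N) y = mono_f n M y * mono_f n N y"
  unfolding mono_f_def by simp

lemma Vsp_add: "f \<in> Vsp n D \<Longrightarrow> g \<in> Vsp n D \<Longrightarrow> (\<lambda>y. f y + g y) \<in> Vsp n D"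
  unfolding Vsp_def
proof clarify
  fix c d assume "\<forall>y. f y = (\<Sum>M\<in>Ms n D. c M * mono_f n M y)" "\<forall>y. g y = (\<Sum>M\<in>Ms n D. d M * mono_f n M y)"
  then have "\<forall>y. f y + g y = (\<Sum>M\<in>Ms n D. (c M + d M) * mono_f n M y)"
    by (simp add: sum.distrib distrib_right)
  then show "\<exists>e. \<forall>y. f y + g y = (\<Sum>M\<in>Ms n D. e M * mono_f n M y)" by (rule exI[where x="\<lambda>M. c M + d M"])
qed

lemma Vsp_scale: "f \<in> Vsp n D \<Longrightarrow> (\<lambda>y. a * f y) \<in> Vsp n D"
  unfolding Vsp_def
proof clarify
  fix c assume "\<forall>y. f y = (\<Sum>M\<in>Ms n D. c M * mono_f n M y)"
  then have "\<forall>y. a * f y = (\<Sum>M\<in>Ms n D. (a * c M) * mono_f n M y)"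
    by (simp add: sum_distrib_left mult.assoc)
  then show "\<exists>e. \<forall>y. a * f y = (\<Sum>M\<in>Ms n D. e M * mono_f n M y)" by (rule exI[where x="\<lambda>M. a * c M"])
qed

lemma Vsp_zero: "(\<lambda>y. 0) \<in> Vsp n D"
  unfolding Vsp_def by (rule CollectI, rule exI[of _ "\<lambda>_. 0"]) simp

lemma Vsp_diff: "f \<in> Vsp n D \<Longrightarrow> g \<in> Vsp n D \<Longrightarrow> (\<lambda>y. f y - g y) \<in> Vsp n D"
  using Vsp_add[of f n D "\<lambda>y. (-1) * g y"] Vsp_scale[of g n D "-1"] by simp

lemma Vsp_sum: "finite I \<Longrightarrow> (\<And>i. i \<in> I \<Longrightarrow> f i \<in> Vsp n D) \<Longrightarrow> (\<lambda>y. \<Sum>i\<in>I. f i y) \<in> Vsp n D"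
proof (induction I rule: finite_induct)
  case empty then show ?case by (simp add: Vsp_zero)
next
  case (insert x F)
  then show ?case using Vsp_add[of "f x" n D "\<lambda>y. \<Sum>i\<in>F. f i y"] by simp
qed

lemma Vsp_const: "(\<lambda>y. a) \<in> Vsp n D"
proof -
  let ?M0 = "replicate_mset D n"
  have M0: "?M0 \<in> Ms n D" unfolding Ms_def multisets_of_size_def by auto
  have m1: "mono_f n ?M0 y = 1" for y :: "nat \<Rightarrow> 'a" unfolding mono_f_def by simp
  have "\<forall>y. a = (\<Sum>M\<in>Ms n D. (if M = ?M0 then a else 0) * mono_f n M y)"
  proof
    fix y :: "nat \<Rightarrow> 'a"
    have "(\<Sum>M\<in>Ms n D. (if M = ?M0 then a else 0) * mono_f n M y) = (\<Sum>M\<in>Ms n D. if M = ?M0 then a else 0)"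
      by (rule sum.cong) (auto simp: m1)
    also have "\<dots> = a" using M0 Ms_finite by simp
    finally show "a = (\<Sum>M\<in>Ms n D. (if M = ?M0 then a else 0) * mono_f n M y)" by simp
  qed
  then show ?thesis unfolding Vsp_def mem_Collect_eq by (rule exI[where x="\<lambda>M. (if M = ?M0 then a else 0)"])
qed

lemma Ms1: "Ms n 1 = (\<lambda>i. {#i#}) ` {..n}"
proof
  show "Ms n 1 \<subseteq> (\<lambda>i. {#i#}) ` {..n}"
  proof
    fix M assume "M \<in> Ms n 1"
    then have "set_mset M \<subseteq> {..n}" "size M = 1" unfolding Ms_def multisets_of_size_def by auto
    then obtain a where "M = {#a#}" using size_1_singleton_mset by blast
    with \<open>set_mset M \<subseteq> {..n}\<close> show "M \<in> (\<lambda>i. {#i#}) ` {..n}" by auto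
  qed
qed (auto simp: Ms_def multisets_of_size_def)

lemma Vsp_lin: "(\<lambda>y. (\<Sum>i<n. u i * y i) + a) \<in> Vsp n 1"
proof -
  let ?c = "\<lambda>M. if M = {#n#} then a else (\<Sum>i<n. if M = {#i#} then u i else 0)"
  have "\<forall>y. (\<Sum>i<n. u i * y i) + a = (\<Sum>M\<in>Ms n 1. ?c M * mono_f n M y)"
  proof
    fix y :: "nat \<Rightarrow> 'a"
    have "(\<Sum>M\<in>Ms n 1. ?c M * mono_f n M y) = (\<Sum>i\<in>{..n}. ?c {#i#} * mono_f n {#i#} y)"
      unfolding Ms1 by (subst sum.reindex) (auto simp: inj_on_def)
    also have "\<dots> = (\<Sum>i\<in>insert n {..<n}. ?c {#i#} * mono_f n {#i#} y)"
      by (rule sum.cong) auto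
    also have "\<dots> = a + (\<Sum>i<n. ?c {#i#} * mono_f n {#i#} y)"
      by (simp add: mono_f_def)
    also have "(\<Sum>i<n. ?c {#i#} * mono_f n {#i#} y) = (\<Sum>i<n. u i * y i)"
    proof (rule sum.cong)
      fix i assume "i \<in> {..<n}"
      then have "(\<Sum>j<n. if {#i#} = {#j#} then u j else 0) = u i"
        by (simp add: sum.delta)
      then show "?c {#i#} * mono_f n {#i#} y = u i * y i" using \<open>i \<in> {..<n}\<close>
        by (simp add: mono_f_def)
    qed simp
    finally show "(\<Sum>i<n. u i * y i) + a = (\<Sum>M\<in>Ms n 1. ?c M * mono_f n M y)" by simp
  qed
  then show ?thesis unfolding Vsp_def mem_Collect_eq by (rule exI[where x="?c"])
qed



lemma Ms_add: "M \<in> Ms n D1 \<Longrightarrow> N \<in> Ms n D2 \<Longrightarrow> M + N \<in> Ms n (D1 + D2)"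
  unfolding Ms_def multisets_of_size_def by auto

lemma Vsp_mult:
  assumes "f \<in> Vsp n D1" "g \<in> Vsp n D2"
  shows "(\<lambda>y. f y * g y) \<in> Vsp n (D1 + D2)"
proof -
  obtain a where a: "\<forall>y. f y = (\<Sum>M\<in>Ms n D1. a M * mono_f n M y)" using assms(1) unfolding Vsp_def by blast
  obtain b where b: "\<forall>y. g y = (\<Sum>M\<in>Ms n D2. b M * mono_f n M y)" using assms(2) unfolding Vsp_def by blast
  let ?S = "Ms n D1 \<times> Ms n D2"
  let ?h = "\<lambda>p. a (fst p) * b (snd p)"
  let ?c = "\<lambda>P. (\<Sum>p\<in>{p. p \<in> ?S \<and> fst p + snd p = P}. ?h p)"
  have fS: "finite ?S" using Ms_finite by simp
  have "\<forall>y. f y * g y = (\<Sum>P\<in>Ms n (D1+D2). ?c P * mono_f n P y)"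
  proof
    fix y :: "nat \<Rightarrow> 'a"
    have "f y * g y = (\<Sum>M\<in>Ms n D1. \<Sum>N\<in>Ms n D2. (a M * mono_f n M y) * (b N * mono_f n N y))"
      using a b by (simp add: sum_product)
    also have "\<dots> = (\<Sum>p\<in>?S. ?h p * mono_f n (fst p + snd p) y)"
      by (simp add: sum.cartesian_product mono_f_add mult_ac case_prod_beta)
    also have "\<dots> = (\<Sum>P\<in>Ms n (D1+D2). \<Sum>p\<in>{p. p \<in> ?S \<and> fst p + snd p = P}. ?h p * mono_f n (fst p + snd p) y)"
      by (rule sum.group[symmetric, OF fS Ms_finite]) (auto intro: Ms_add)
    also have "\<dots> = (\<Sum>P\<in>Ms n (D1+D2). ?c P * mono_f n P y)"
    proof (rule sum.cong[OF refl])
      fix P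
      have "(\<Sum>p\<in>{p. p \<in> ?S \<and> fst p + snd p = P}. ?h p * mono_f n (fst p + snd p) y)
          = (\<Sum>p\<in>{p. p \<in> ?S \<and> fst p + snd p = P}. ?h p * mono_f n P y)"
        by (rule sum.cong) auto
      then show "(\<Sum>p\<in>{p. p \<in> ?S \<and> fst p + snd p = P}. ?h p * mono_f n (fst p + snd p) y) = ?c P * mono_f n P y"
        by (simp add: sum_distrib_right)
    qed
    finally show "f y * g y = (\<Sum>P\<in>Ms n (D1+D2). ?c P * mono_f n P y)" .
  qed
  then show ?thesis unfolding Vsp_def mem_Collect_eq by (rule exI[where x="?c"])
qed

lemma Vsp_power: "f \<in> Vsp n D \<Longrightarrow> (\<lambda>y. f y ^ e) \<in> Vsp n (e * D)"
proof (induction e)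
  case 0 then show ?case using Vsp_const[of 1 n 0] by simp
next
  case (Suc e)
  then show ?case using Vsp_mult[of f n D "\<lambda>y. f y ^ e" "e * D"] by (simp add: add.commute)
qed

lemma Vsp_prod: "finite I \<Longrightarrow> (\<And>i. i \<in> I \<Longrightarrow> f i \<in> Vsp n D) \<Longrightarrow> (\<lambda>y. \<Prod>i\<in>I. f i y) \<in> Vsp n (card I * D)"
proof (induction I rule: finite_induct)
  case empty then show ?case using Vsp_const[of 1 n 0] by simp
next
  case (insert x F)
  then show ?case using Vsp_mult[of "f x" n D "\<lambda>y. \<Prod>i\<in>F. f i y" "card F * D"] by simp
qed

lemma Vsp_card: "finite (Vsp n D :: ((nat \<Rightarrow> 'a::{comm_ring_1,finite}) \<Rightarrow> 'a) set) \<and>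
   card (Vsp n D :: ((nat \<Rightarrow> 'a) \<Rightarrow> 'a) set) \<le> CARD('a) ^ card (Ms n D)"
proof -
  let ?E = "\<lambda>c. (\<lambda>y::nat \<Rightarrow> 'a. \<Sum>M\<in>Ms n D. c M * mono_f n M y)"
  have "Vsp n D \<subseteq> ?E ` (Ms n D \<rightarrow>\<^sub>E (UNIV :: 'a set))"
  proof
    fix f :: "(nat \<Rightarrow> 'a) \<Rightarrow> 'a" assume "f \<in> Vsp n D"
    then obtain c where c: "\<forall>y. f y = (\<Sum>M\<in>Ms n D. c M * mono_f n M y)" unfolding Vsp_def by blast
    have "f = ?E (restrict c (Ms n D))" using c by (auto intro!: sum.cong)
    moreover have "restrict c (Ms n D) \<in> Ms n D \<rightarrow>\<^sub>E UNIV" by simp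
    ultimately show "f \<in> ?E ` (Ms n D \<rightarrow>\<^sub>E UNIV)" by blast
  qed
  moreover have "finite (Ms n D \<rightarrow>\<^sub>E (UNIV :: 'a set))" using Ms_finite by (simp add: finite_PiE)
  moreover have "card (Ms n D \<rightarrow>\<^sub>E (UNIV :: 'a set)) = CARD('a) ^ card (Ms n D)"
    using Ms_finite by (simp add: card_PiE)
  ultimately show ?thesis
  proof -
    assume sub: "Vsp n D \<subseteq> ?E ` (Ms n D \<rightarrow>\<^sub>E (UNIV :: 'a set))"
      and fin: "finite (Ms n D \<rightarrow>\<^sub>E (UNIV :: 'a set))"
      and cd: "card (Ms n D \<rightarrow>\<^sub>E (UNIV :: 'a set)) = CARD('a) ^ card (Ms n D)"
    have fi: "finite (?E ` (Ms n D \<rightarrow>\<^sub>E (UNIV :: 'a set)))" using fin by simp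
    have "card (Vsp n D :: ((nat \<Rightarrow> 'a) \<Rightarrow> 'a) set) \<le> card (?E ` (Ms n D \<rightarrow>\<^sub>E (UNIV :: 'a set)))"
      by (rule card_mono[OF fi sub])
    also have "\<dots> \<le> card (Ms n D \<rightarrow>\<^sub>E (UNIV :: 'a set))" by (rule card_image_le[OF fin])
    finally show ?thesis using cd finite_subset[OF sub fi] by simp
  qed
qed



lemma binom_mono2:
  assumes "a \<le> a'" "b \<le> b'"
  shows "(a+b) choose b \<le> (a'+b') choose b'"
proof -
  have "(a+b) choose b \<le> (a'+b) choose b" by (rule binomial_right_mono) (use assms in simp)
  also have "\<dots> \<le> (a'+b') choose b'" using assms(2)
  proof (induction b' rule: dec_induct)
    case base then show ?case by simp
  next
    case (step m)
    have "(a' + Suc m) choose Suc m = (Suc (a'+m)) choose (Suc m)" by simp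
    also have "\<dots> = ((a'+m) choose m) + ((a'+m) choose Suc m)" by (rule binomial_Suc_Suc)
    finally show ?case using step.IH by simp
  qed
  finally show ?thesis .
qed

lemma binom_key:
  assumes "1 \<le> j" "2 \<le> q"
  shows "((n+j*(q-1)) choose (j*(q-1))) + ((n+(j-1)*q) choose ((j-1)*(q-1))) \<le> (n + j*q) choose (j*(q-1))"
proof -
  obtain j0 where j: "j = Suc j0" using assms(1) by (cases j) auto
  obtain r where q: "q = Suc (Suc r)" using assms(2) by (metis add_2_eq_Suc le_Suc_ex)
  let ?D1 = "r + j0 * Suc r"
  have e1: "n + j*q = Suc (n + j + ?D1)" using j q by (simp add: algebra_simps)
  have e2: "j*(q-1) = Suc ?D1" using j q by simp
  have "(n + j*q) choose (j*(q-1)) = ((n+j+?D1) choose ?D1) + ((n+j+?D1) choose Suc ?D1)"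
    unfolding e1 e2 by (rule binomial_Suc_Suc)
  moreover have "(n+j*(q-1)) choose (j*(q-1)) \<le> (n+j+?D1) choose Suc ?D1"
  proof -
    have "(n+j*(q-1)) choose (j*(q-1)) = (n + Suc ?D1) choose (Suc ?D1)" using e2 by simp
    also have "\<dots> \<le> (n + j0 + Suc ?D1) choose (Suc ?D1)" by (rule binom_mono2) auto
    also have "n + j0 + Suc ?D1 = n+j+?D1" using j by simp
    finally show ?thesis .
  qed
  moreover have "(n+(j-1)*q) choose ((j-1)*(q-1)) \<le> (n+j+?D1) choose ?D1"
  proof -
    have "(n+(j-1)*q) choose ((j-1)*(q-1)) = ((n + j0) + j0 * Suc r) choose (j0 * Suc r)"
      using j q by (simp add: algebra_simps)
    also have "\<dots> \<le> ((n+j) + ?D1) choose ?D1" by (rule binom_mono2) (use j in auto)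
    finally show ?thesis by (simp add: add.assoc)
  qed
  ultimately show ?thesis by linarith
qed



definition pts :: "nat \<Rightarrow> (nat \<Rightarrow> 'b) \<Rightarrow> 'b set" where
  "pts j x = x ` {1..j+1}"

definition noc :: "nat \<Rightarrow> nat \<Rightarrow> (nat \<Rightarrow> 'a::comm_ring_1) set \<Rightarrow> bool" where
  "noc n j S \<longleftrightarrow> \<not>(\<exists>x. (\<forall>i\<in>{1..j+1}. x i \<in> S) \<and> right_corner n j x)"

lemma pts_sub: "(\<forall>i\<in>{1..j+1}. x i \<in> S) \<longleftrightarrow> pts j x \<subseteq> S"
  unfolding pts_def by auto

lemma greedy:
  fixes S :: "(nat \<Rightarrow> 'a::comm_ring_1) set"
  assumes "finite S"
  shows "\<exists>L. (\<forall>x\<in>set L. pts j x \<subseteq> S \<and> right_corner n j x) \<and>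
    (\<forall>a<length L. \<forall>b<length L. a \<noteq> b \<longrightarrow> pts j (L!a) \<inter> pts j (L!b) = {}) \<and>
    noc n j (S - (\<Union>x\<in>set L. pts j x))"
  using assms
proof (induction "card S" arbitrary: S rule: less_induct)
  case less
  show ?case
  proof (cases "noc n j S")
    case True
    then show ?thesis by (intro exI[where x="[]"]) simp
  next
    case False
    then obtain x where x: "pts j x \<subseteq> S" "right_corner n j x" unfolding noc_def pts_sub by blast
    let ?S' = "S - pts j x"
    have "x 1 \<in> pts j x" unfolding pts_def by auto
    then have "?S' \<subset> S" using x(1) by blast
    then have "card ?S' < card S" by (rule psubset_card_mono[OF less.prems])
    then obtain L where L: "\<forall>y\<in>set L. pts j y \<subseteq> ?S' \<and> right_corner n j y"
      "\<forall>a<length L. \<forall>b<length L. a \<noteq> b \<longrightarrow> pts j (L!a) \<inter> pts j (L!b) = {}"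
      "noc n j (?S' - (\<Union>y\<in>set L. pts j y))"
      using less.hyps less.prems by blast
    have d: "pts j x \<inter> pts j (L!a) = {}" if "a < length L" for a
      using L(1) that nth_mem by blast
    have "\<forall>a<length (x#L). \<forall>b<length (x#L). a \<noteq> b \<longrightarrow> pts j ((x#L)!a) \<inter> pts j ((x#L)!b) = {}"
    proof (intro allI impI)
      fix a b assume ab: "a < length (x#L)" "b < length (x#L)" "a \<noteq> b"
      show "pts j ((x#L)!a) \<inter> pts j ((x#L)!b) = {}"
      proof (cases a)
        case 0 then show ?thesis using ab d by (cases b) auto
      next
        case (Suc a')
        then show ?thesis using ab d L(2) by (cases b) auto
      qed
    qed
    moreover have "\<forall>y\<in>set (x#L). pts j y \<subseteq> S \<and> right_corner n j y" using L(1) x by auto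
    moreover have "S - (\<Union>y\<in>set (x#L). pts j y) = ?S' - (\<Union>y\<in>set L. pts j y)" by auto
    ultimately have "(\<forall>y\<in>set (x#L). pts j y \<subseteq> S \<and> right_corner n j y) \<and>
      (\<forall>a<length (x#L). \<forall>b<length (x#L). a \<noteq> b \<longrightarrow> pts j ((x#L)!a) \<inter> pts j ((x#L)!b) = {}) \<and>
      noc n j (S - (\<Union>y\<in>set (x#L). pts j y))" using L(3) by simp
    then show ?thesis by (rule exI[where x="x#L"])
  qed
qed

definition gfun :: "nat \<Rightarrow> nat \<Rightarrow> (nat \<Rightarrow> nat \<Rightarrow> 'a::{field,finite}) \<Rightarrow> (nat \<Rightarrow> 'a) \<Rightarrow> 'a" where
  "gfun n j x y = (\<Prod>t\<in>{1..j}. 1 - (bform n (\<lambda>s. x t s - x (j+1) s) (\<lambda>s. y s - x (j+1) s)) ^ (CARD('a) - 1))"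

lemma bform_lin: "bform n u (\<lambda>s. y s - z s) = (\<Sum>i<n. u i * y i) + (- (\<Sum>i<n. u i * z i))"
  unfolding bform_def by (simp add: right_diff_distrib sum_subtractf)

lemma gfun_in: "gfun n j (x :: nat \<Rightarrow> nat \<Rightarrow> 'a::{field,finite}) \<in> Vsp n (j * (CARD('a) - 1))"
proof -
  have "(\<lambda>y. \<Prod>t\<in>{1..j}. 1 - (bform n (\<lambda>s. x t s - x (j+1) s) (\<lambda>s. y s - x (j+1) s)) ^ (CARD('a) - 1))
        \<in> Vsp n (card {1..j} * (CARD('a) - 1))"
  proof (rule Vsp_prod)
    fix t
    have l: "(\<lambda>y. bform n (\<lambda>s. x t s - x (j+1) s) (\<lambda>s. y s - x (j+1) s)) \<in> Vsp n 1"
      unfolding bform_lin by (rule Vsp_lin)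
    have "(\<lambda>y. (bform n (\<lambda>s. x t s - x (j+1) s) (\<lambda>s. y s - x (j+1) s)) ^ (CARD('a) - 1)) \<in> Vsp n ((CARD('a) - 1) * 1)"
      by (rule Vsp_power[OF l])
    then show "(\<lambda>y. 1 - (bform n (\<lambda>s. x t s - x (j+1) s) (\<lambda>s. y s - x (j+1) s)) ^ (CARD('a) - 1)) \<in> Vsp n (CARD('a) - 1)"
      using Vsp_diff[OF Vsp_const[of 1]] by simp
  qed simp
  then show ?thesis unfolding gfun_def[abs_def] by simp
qed

lemma gfun_self: "gfun n j (x :: nat \<Rightarrow> nat \<Rightarrow> 'a::{field,finite}) (x (j+1)) = 1"
proof -
  have "CARD('a) - 1 \<noteq> 0" using card_ge2[where 'a='a] by simp
  then obtain c where c: "CARD('a) - 1 = Suc c" by (cases "CARD('a) - 1") auto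
  show ?thesis unfolding gfun_def bform_def c by simp
qed

lemma gfun_nz:
  assumes "gfun n j (x :: nat \<Rightarrow> nat \<Rightarrow> 'a::{field,finite}) y \<noteq> 0" "t \<in> {1..j}"
  shows "bform n (\<lambda>s. x t s - x (j+1) s) (\<lambda>s. y s - x (j+1) s) = 0"
proof (rule ccontr)
  assume "bform n (\<lambda>s. x t s - x (j+1) s) (\<lambda>s. y s - x (j+1) s) \<noteq> 0"
  then have "1 - (bform n (\<lambda>s. x t s - x (j+1) s) (\<lambda>s. y s - x (j+1) s)) ^ (CARD('a) - 1) = 0"
    using ff_pow by simp
  then have "gfun n j x y = 0" unfolding gfun_def using assms(2) by (intro prod_zero) auto
  then show False using assms(1) by simp
qed

lemma extend:
  fixes x :: "nat \<Rightarrow> nat \<Rightarrow> 'a::comm_ring_1"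
  assumes rc: "right_corner n j x" and y: "y \<in> Fvec n" "y \<notin> pts j x"
    and orth: "\<forall>t\<in>{1..j}. bform n (\<lambda>s. x t s - x (j+1) s) (\<lambda>s. y s - x (j+1) s) = 0"
  defines "w \<equiv> (\<lambda>t. if t \<le> j then x t else if t = j+1 then y else x (j+1))"
  shows "right_corner n (Suc j) w" "pts (Suc j) w \<subseteq> insert y (pts j x)"
proof -
  have F: "\<forall>i\<in>{1..j+1}. x i \<in> Fvec n" and I: "inj_on x {1..j+1}"
    and O: "\<forall>i k. 1 \<le> i \<and> i < k \<and> k \<le> j \<longrightarrow> bform n (\<lambda>t. x i t - x (j+1) t) (\<lambda>t. x k t - x (j+1) t) = 0"
    using rc unfolding right_corner_def by auto
  have yn: "y \<noteq> x i" if "i \<in> {1..j+1}" for i using y(2) that unfolding pts_def by auto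
  show "pts (Suc j) w \<subseteq> insert y (pts j x)" unfolding pts_def w_def by auto
  have "\<forall>i\<in>{1..Suc j+1}. w i \<in> Fvec n" using F y(1) unfolding w_def by auto
  moreover have "inj_on w {1..Suc j+1}"
  proof (rule inj_onI)
    fix a b assume ab: "a \<in> {1..Suc j+1}" "b \<in> {1..Suc j+1}" "w a = w b"
    define \<phi> where "\<phi> t = (if t \<le> j then t else j+1)" for t
    have wphi: "w t = x (\<phi> t)" if "t \<noteq> j+1" for t using that unfolding w_def \<phi>_def by auto
    have phir: "\<phi> t \<in> {1..j+1}" if "t \<in> {1..Suc j+1}" for t using that unfolding \<phi>_def by auto
    have wy: "w (j+1) = y" unfolding w_def by simp
    show "a = b"
    proof (cases "a = j+1 \<or> b = j+1")
      case True
      then show ?thesis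
      proof
        assume a: "a = j+1"
        show ?thesis
        proof (rule ccontr)
          assume "a \<noteq> b"
          then have "y = x (\<phi> b)" using ab(3) a wphi wy by simp
          then show False using yn phir ab(2) by blast
        qed
      next
        assume b: "b = j+1"
        show ?thesis
        proof (rule ccontr)
          assume "a \<noteq> b"
          then have "y = x (\<phi> a)" using ab(3) b wphi wy by simp
          then show False using yn phir ab(1) by blast
        qed
      qed
    next
      case False
      then have "x (\<phi> a) = x (\<phi> b)" using ab(3) wphi by simp
      then have "\<phi> a = \<phi> b" using I phir ab(1,2) unfolding inj_on_def by blast
      then show ?thesis using False ab(1,2) unfolding \<phi>_def by (auto split: if_splits)
    qed
  qed
  moreover have "\<forall>i k. 1 \<le> i \<and> i < k \<and> k \<le> Suc j \<longrightarrow>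
        bform n (\<lambda>t. w i t - w (Suc j+1) t) (\<lambda>t. w k t - w (Suc j+1) t) = 0"
  proof (intro allI impI)
    fix i k assume ik: "1 \<le> i \<and> i < k \<and> k \<le> Suc j"
    show "bform n (\<lambda>t. w i t - w (Suc j+1) t) (\<lambda>t. w k t - w (Suc j+1) t) = 0"
    proof (cases "k \<le> j")
      case True then show ?thesis using O ik unfolding w_def by auto
    next
      case False
      then have "k = j+1" using ik by simp
      then show ?thesis using orth ik unfolding w_def by auto
    qed
  qed
  ultimately show "right_corner n (Suc j) w" unfolding right_corner_def by blast
qed



lemma indep_bound:
  fixes L :: "(nat \<Rightarrow> nat \<Rightarrow> 'a::{field,finite}) list" and S :: "(nat \<Rightarrow> 'a) set"
  assumes L1: "\<forall>x\<in>set L. pts j x \<subseteq> S \<and> right_corner n j x"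
    and L2: "\<forall>a<length L. \<forall>b<length L. a \<noteq> b \<longrightarrow> pts j (L!a) \<inter> pts j (L!b) = {}"
    and SF: "S \<subseteq> Fvec n" and nc: "noc n (Suc j) S"
  shows "length L \<le> card (Ms n (j * (CARD('a) - 1)))"
proof -
  let ?m = "length L"
  let ?g = "\<lambda>i. gfun n j (L!i)"
  let ?z = "\<lambda>i. (L!i) (j+1)"
  let ?V = "Vsp n (j * (CARD('a) - 1)) :: ((nat \<Rightarrow> 'a) \<Rightarrow> 'a) set"
  have zin: "?z i \<in> pts j (L!i)" for i unfolding pts_def by auto
  have g0: "?g i (?z l) = 0" if il: "i < ?m" "l < ?m" "i \<noteq> l" for i l
  proof (rule ccontr)
    assume nz: "?g i (?z l) \<noteq> 0"
    have rc: "right_corner n j (L!i)" and si: "pts j (L!i) \<subseteq> S" using L1 il nth_mem by blast+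
    have zl: "?z l \<in> S" using L1 il zin nth_mem by blast
    have znot: "?z l \<notin> pts j (L!i)" using L2 il zin by blast
    have orth: "\<forall>t\<in>{1..j}. bform n (\<lambda>s. (L!i) t s - (L!i) (j+1) s) (\<lambda>s. ?z l s - (L!i) (j+1) s) = 0"
      using gfun_nz[OF nz] by blast
    define w where "w = (\<lambda>t. if t \<le> j then (L!i) t else if t = j+1 then ?z l else (L!i) (j+1))"
    have "right_corner n (Suc j) w" "pts (Suc j) w \<subseteq> insert (?z l) (pts j (L!i))"
      using extend[OF rc _ znot orth] zl SF unfolding w_def by auto
    then have "pts (Suc j) w \<subseteq> S" "right_corner n (Suc j) w" using zl si by auto
    then show False using nc unfolding noc_def pts_sub by blast
  qed
  have g1: "?g i (?z i) = 1" for i by (rule gfun_self)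
  let ?P = "{..<?m} \<rightarrow>\<^sub>E (UNIV :: 'a set)"
  let ?Phi = "\<lambda>c. (\<lambda>y. \<Sum>i<?m. c i * ?g i y)"
  have ev: "?Phi c (?z l) = c l" if "l < ?m" for c l
  proof -
    have "(\<Sum>i<?m. c i * ?g i (?z l)) = (\<Sum>i<?m. if i = l then c l else 0)"
      by (rule sum.cong) (use g0 g1 that in auto)
    also have "\<dots> = c l" using that by simp
    finally show ?thesis .
  qed
  have inj: "inj_on ?Phi ?P"
  proof (rule inj_onI)
    fix c d assume cd: "c \<in> ?P" "d \<in> ?P" "?Phi c = ?Phi d"
    show "c = d"
    proof (rule PiE_ext[OF cd(1,2)])
      fix l assume "l \<in> {..<?m}"
      then have "c l = ?Phi c (?z l)" "d l = ?Phi d (?z l)" using ev[of l c] ev[of l d] by simp_all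
      then show "c l = d l" using cd(3) by metis
    qed
  qed
  have sub: "?Phi ` ?P \<subseteq> ?V"
  proof
    fix f assume "f \<in> ?Phi ` ?P"
    then obtain c where "f = ?Phi c" by blast
    moreover have "?Phi c \<in> ?V"
      by (intro Vsp_sum Vsp_scale gfun_in) simp
    ultimately show "f \<in> ?V" by simp
  qed
  have "CARD('a) ^ ?m = card ?P" by (simp add: card_PiE)
  also have "\<dots> = card (?Phi ` ?P)" by (rule card_image[OF inj, symmetric])
  also have "\<dots> \<le> card ?V" by (rule card_mono[OF conjunct1[OF Vsp_card] sub])
  also have "\<dots> \<le> CARD('a) ^ card (Ms n (j * (CARD('a) - 1)))" using Vsp_card[where 'a='a] by blast
  finally show ?thesis
    by (rule power_le_imp_le_exp[rotated]) (use card_ge2[where 'a='a] in simp)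
qed

lemma main:
  fixes S :: "(nat \<Rightarrow> 'a::{field,finite}) set"
  assumes "1 \<le> j" "finite S" "S \<subseteq> Fvec n" "noc n j S"
  shows "card S \<le> j * ((n + (j-1)*CARD('a)) choose ((j-1)*(CARD('a)-1)))"
  using assms(1) assms(2-4)
proof (induction j arbitrary: S rule: nat_induct_at_least)
  case base
  have "card S \<le> Suc 0"
  proof (rule ccontr)
    assume "\<not> card S \<le> Suc 0"
    then obtain a b where ab: "a \<in> S" "b \<in> S" "a \<noteq> b" using card_le_Suc0_iff_eq[OF base.prems(1)] by blast
    define x where "x = (\<lambda>i::nat. if i = 1 then a else b)"
    have "\<forall>i\<in>{1..1+1}. x i \<in> S" unfolding x_def using ab by auto
    moreover have "right_corner n 1 x"
      unfolding right_corner_def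
    proof (intro conjI)
      show "\<forall>i\<in>{1..1+1}. x i \<in> Fvec n" unfolding x_def using ab base.prems(2) by auto
      show "inj_on x {1..1+1}" unfolding x_def inj_on_def using ab by auto
    qed auto
    ultimately show False using base.prems(3) unfolding noc_def by blast
  qed
  then show ?case by simp
next
  case (Suc j)
  obtain L where L1: "\<forall>x\<in>set L. pts j x \<subseteq> S \<and> right_corner n j x"
    and L2: "\<forall>a<length L. \<forall>b<length L. a \<noteq> b \<longrightarrow> pts j (L!a) \<inter> pts j (L!b) = {}"
    and L3: "noc n j (S - (\<Union>x\<in>set L. pts j x))"
    using greedy[OF Suc.prems(1)] by blast
  let ?R = "S - (\<Union>x\<in>set L. pts j x)"
  let ?q = "CARD('a)"
  let ?B = "(n + (j-1)*?q) choose ((j-1)*(?q-1))"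
  let ?N = "(n + j*(?q-1)) choose (j*(?q-1))"
  have R: "card ?R \<le> j * ?B" using Suc.IH[of ?R] Suc.prems L3 by auto
  have m: "length L \<le> ?N" using indep_bound[OF L1 L2 Suc.prems(2,3)] by (simp add: Ms_card)
  have "S \<subseteq> ?R \<union> (\<Union>i<length L. pts j (L!i))" by (auto simp: in_set_conv_nth)
  moreover have "finite (?R \<union> (\<Union>i<length L. pts j (L!i)))" using Suc.prems(1) by (simp add: pts_def)
  ultimately have "card S \<le> card (?R \<union> (\<Union>i<length L. pts j (L!i)))"
    by (intro card_mono)
  also have "\<dots> \<le> card ?R + card (\<Union>i<length L. pts j (L!i))" by (rule card_Un_le)
  finally have c1: "card S \<le> card ?R + card (\<Union>i<length L. pts j (L!i))" .
  have "card (\<Union>i<length L. pts j (L!i)) \<le> (\<Sum>i<length L. card (pts j (L!i)))" by (rule card_UN_le) simp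
  also have "\<dots> \<le> (\<Sum>i<length L. Suc j)"
  proof (rule sum_mono)
    fix i show "card (pts j (L!i)) \<le> Suc j" unfolding pts_def using card_image_le[of "{1..j+1}" "L!i"] by simp
  qed
  also have "\<dots> = length L * Suc j" by simp
  also have "\<dots> \<le> ?N * Suc j" by (rule mult_le_mono1[OF m])
  finally have c2: "card (\<Union>i<length L. pts j (L!i)) \<le> ?N * Suc j" .
  have "card S \<le> j * ?B + ?N * Suc j" using c1 c2 R by linarith
  also have "\<dots> \<le> Suc j * (?N + ?B)" by (simp add: algebra_simps)
  also have "\<dots> \<le> Suc j * ((n + j*?q) choose (j*(?q-1)))"
    using binom_key[of j ?q n] Suc.hyps card_ge2[where 'a='a] by (intro mult_le_mono2) simp
  finally show ?case by simp
qed


theorem theorem2: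
  fixes A :: "(nat \<Rightarrow> 'a::{field,finite}) set"
    and n k p r :: nat
  assumes "k \<ge> 2"
    and "prime p" and "CARD('a) = p ^ r" and "p > k"
    and "A \<subseteq> Fvec n"
    and "card A > (k + 1) * ((n + (k - 1) * CARD('a)) choose ((k - 1) * (CARD('a) - 1)))"
  shows "\<exists>x. (\<forall>i\<in>{1..k+1}. x i \<in> A) \<and> right_corner n k x"
proof (rule ccontr)
  assume nc: "\<not> (\<exists>x. (\<forall>i\<in>{1..k+1}. x i \<in> A) \<and> right_corner n k x)"
  have fin: "finite A" using assms(6) card.infinite by fastforce
  have "card A \<le> k * ((n + (k - 1) * CARD('a)) choose ((k - 1) * (CARD('a) - 1)))"
    using main[of k A n] assms(1,5) fin nc unfolding noc_def by simp
  also have "\<dots> \<le> (k + 1) * ((n + (k - 1) * CARD('a)) choose ((k - 1) * (CARD('a) - 1)))" by simp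
  finally show False using assms(6) by simp
qed

end
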